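(* The enhanced power graph of the abelian group $\mathbf C_{30}\times\mathbf C_{30}$ is not perfect; more precisely, if $a_1,a_2$ are elements of order $2$, $b_1,b_2$ elements of order $3$, and $c_1,c_2$ elements of order $5$ with $\langle a_1,a_2\rangle$, $\langle b_1,b_2\rangle$, $\langle c_1,c_2\rangle$ non-cyclic, then the vertices $a_1b_1,\ b_1c_2,\ a_2,\ b_2,\ a_1c_1$ induce a $5$-cycle in $\mathcal G_e(\mathbf C_{30}\times\mathbf C_{30})$.
   Context: $\mathbf C_{30}$ is the cyclic group of order $30$. The enhanced power graph $\mathcal G_e(\mathbf G)$ has vertex set $G$, distinct $x,y$ adjacent iff $\langle x,y\rangle$ is cyclic. A graph is perfect if every induced subgraph has chromatic number equal to its clique number. *)

theory Defs
  imports "HOL-Algebra.Algebra"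
begin

abbreviation C :: "nat \<Rightarrow> int monoid" where
  "C n \<equiv> integer_mod_group n"

definition enhanced_power_adj :: "('a, 'b) monoid_scheme \<Rightarrow> 'a \<Rightarrow> 'a \<Rightarrow> bool" where
  "enhanced_power_adj G x y \<longleftrightarrow>
     x \<in> carrier G \<and> y \<in> carrier G \<and> x \<noteq> y \<and> cyclic_group (subgroup_generated G {x, y})"

definition is_clique :: "('v \<Rightarrow> 'v \<Rightarrow> bool) \<Rightarrow> 'v set \<Rightarrow> bool" where
  "is_clique E K \<longleftrightarrow> (\<forall>x\<in>K. \<forall>y\<in>K. x \<noteq> y \<longrightarrow> E x y)"

definition clique_number :: "('v \<Rightarrow> 'v \<Rightarrow> bool) \<Rightarrow> 'v set \<Rightarrow> nat" where
  "clique_number E S = Max {card K | K. K \<subseteq> S \<and> is_clique E K}"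

definition proper_colouring :: "('v \<Rightarrow> 'v \<Rightarrow> bool) \<Rightarrow> 'v set \<Rightarrow> nat \<Rightarrow> ('v \<Rightarrow> nat) \<Rightarrow> bool" where
  "proper_colouring E S k f \<longleftrightarrow>
     (\<forall>x\<in>S. f x < k) \<and> (\<forall>x\<in>S. \<forall>y\<in>S. x \<noteq> y \<and> E x y \<longrightarrow> f x \<noteq> f y)"

definition chromatic_number :: "('v \<Rightarrow> 'v \<Rightarrow> bool) \<Rightarrow> 'v set \<Rightarrow> nat" where
  "chromatic_number E S = (LEAST k. \<exists>f. proper_colouring E S k f)"

definition perfect_graph :: "'v set \<Rightarrow> ('v \<Rightarrow> 'v \<Rightarrow> bool) \<Rightarrow> bool" where
  "perfect_graph V E \<longleftrightarrow> (\<forall>S. S \<subseteq> V \<longrightarrow> chromatic_number E S = clique_number E S)"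

definition induces_cycle :: "('v \<Rightarrow> 'v \<Rightarrow> bool) \<Rightarrow> 'v list \<Rightarrow> bool" where
  "induces_cycle E vs \<longleftrightarrow> length vs \<ge> 3 \<and> distinct vs \<and>
     (\<forall>i<length vs. \<forall>j<length vs.
        E (vs ! i) (vs ! j) \<longleftrightarrow> (j = Suc i mod length vs \<or> i = Suc j mod length vs))"

end

theory Submission
  imports Defs
begin


context group begin

lemma subgroup_nat_pow_closed':
  assumes "subgroup H G" "h \<in> H" shows "h [^] (n::nat) \<in> H"
  using subgroup_int_pow_closed[OF assms, of "int n"] by (simp add: int_pow_int)

lemma sub_cyclic:
  assumes fin: "finite (carrier G)" and S: "S \<subseteq> carrier G" and g: "g \<in> carrier G"
    and sub: "generate G S \<subseteq> generate G {g}"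
  shows "cyclic_group (subgroup_generated G S)"
proof -
  let ?K = "generate G S"
  have Ksub: "subgroup ?K G" using generate_is_subgroup S by blast
  have gen: "generate G {g} = {g [^] k | k. k \<in> (UNIV::nat set)}"
    using generate_pow_on_finite_carrier fin g by blast
  have ordpos: "ord g > 0" using ord_ge_1[OF fin g] by simp
  define N where "N = (LEAST n::nat. 0 < n \<and> g [^] n \<in> ?K)"
  have ex: "0 < ord g \<and> g [^] ord g \<in> ?K"
    using ordpos pow_ord_eq_1[OF g] subgroup.one_closed[OF Ksub] by simp
  have "0 < N \<and> g [^] N \<in> ?K" unfolding N_def using ex by (rule LeastI)
  hence N: "0 < N" "g [^] N \<in> ?K" by auto
  have min: "\<And>r. 0 < r \<Longrightarrow> r < N \<Longrightarrow> g [^] r \<notin> ?K"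
    unfolding N_def using not_less_Least by blast
  have gN: "g [^] N \<in> carrier G" using g by simp
  have "?K = generate G {g [^] N}"
  proof
    show "generate G {g[^]N} \<subseteq> ?K" using generate_subgroup_incl N Ksub by blast
    show "?K \<subseteq> generate G {g[^]N}"
    proof
      fix h assume h: "h \<in> ?K"
      then obtain k where k: "h = g [^] (k::nat)" using sub gen by auto
      have "g [^] k = g [^] (N * (k div N) + k mod N)" by simp
      also have "\<dots> = (g[^]N)[^](k div N) \<otimes> g [^] (k mod N)"
        using g by (simp add: nat_pow_mult nat_pow_pow)
      finally have e: "g [^] k = (g[^]N)[^](k div N) \<otimes> g [^] (k mod N)" .
      have "g [^] (k mod N) = inv ((g[^]N)[^](k div N)) \<otimes> h"
        using e k g by (simp add: inv_solve_left)
      moreover have "inv ((g[^]N)[^](k div N)) \<in> ?K"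
        using subgroup_nat_pow_closed'[OF Ksub N(2)] subgroup.m_inv_closed[OF Ksub] by blast
      ultimately have "g [^] (k mod N) \<in> ?K" using h subgroup.m_closed[OF Ksub] by simp
      hence "k mod N = 0" using min N(1) by (meson mod_less_divisor neq0_conv)
      hence "h = (g[^]N)[^](k div N)" using e k g by simp
      thus "h \<in> generate G {g[^]N}"
        using subgroup_nat_pow_closed'[OF generate_is_subgroup generate.incl] gN by auto
    qed
  qed
  then have "subgroup_generated G S = subgroup_generated G {g [^] N}"
    using S gN by (simp add: subgroup_generated_def Int_absorb1)
  thus ?thesis using cyclic_group_generated by simp
qed

lemma cyclic_gen:
  assumes T: "T \<subseteq> carrier G" and c: "cyclic_group (subgroup_generated G T)"
  shows "\<exists>g\<in>carrier G. generate G T \<subseteq> generate G {g}"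
proof -
  interpret H: group "subgroup_generated G T" by (rule group_subgroup_generated)
  obtain x where x: "x \<in> carrier (subgroup_generated G T)"
     "carrier (subgroup_generated G T) = range (\<lambda>n::int. x [^]\<^bsub>subgroup_generated G T\<^esub> n)"
    using H.cyclic_group c by blast
  have cT: "carrier (subgroup_generated G T) = generate G T"
    by (simp add: carrier_subgroup_generated Int_absorb1 T)
  have xG: "x \<in> carrier G" using generate_in_carrier[OF T] x(1) cT by simp
  have "generate G T \<subseteq> generate G {x}"
  proof
    fix h assume "h \<in> generate G T"
    then obtain n::int where "h = x [^]\<^bsub>subgroup_generated G T\<^esub> n" using x(2) cT by blast
    then have "h = x [^] n" using int_pow_subgroup_generated[OF x(1)] by simp
    then show "h \<in> generate G {x}" using generate_pow[OF xG] by blast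
  qed
  thus ?thesis using xG by blast
qed

lemma cyc_mono:
  assumes fin: "finite (carrier G)" and S: "S \<subseteq> carrier G" and T: "T \<subseteq> carrier G"
    and sub: "S \<subseteq> generate G T" and c: "cyclic_group (subgroup_generated G T)"
  shows "cyclic_group (subgroup_generated G S)"
proof -
  obtain g where g: "g \<in> carrier G" "generate G T \<subseteq> generate G {g}" using cyclic_gen[OF T c] by blast
  have "generate G S \<subseteq> generate G T"
    using generate_subgroup_incl[OF sub generate_is_subgroup[OF T]] .
  thus ?thesis using sub_cyclic[OF fin S g(1)] g(2) by blast
qed

lemma pow_in_gen:
  assumes "x \<in> carrier G" shows "x [^] (n::nat) \<in> generate G {x}"
  using subgroup_nat_pow_closed'[OF generate_is_subgroup generate.incl] assms by auto

end


context comm_group begin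

lemma powmod: assumes x: "x \<in> carrier G" and p: "x [^] (p::nat) = \<one>"
  shows "x [^] (n::nat) = x [^] (n mod p)"
proof -
  have "x [^] n = x [^] (p * (n div p) + n mod p)" by simp
  also have "\<dots> = (x [^] p) [^] (n div p) \<otimes> x [^] (n mod p)"
    using x by (simp add: nat_pow_mult nat_pow_pow)
  finally show ?thesis using p x by simp
qed

lemma pow0: "x \<in> carrier G \<Longrightarrow> x [^] (p::nat) = \<one> \<Longrightarrow> n mod p = 0 \<Longrightarrow> x [^] (n::nat) = \<one>"
  using powmod by (metis nat_pow_0)
lemma pow1: "x \<in> carrier G \<Longrightarrow> x [^] (p::nat) = \<one> \<Longrightarrow> n mod p = 1 \<Longrightarrow> x [^] (n::nat) = x"
  using powmod by (metis nat_pow_eone)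

lemma pmd: "x \<in> carrier G \<Longrightarrow> y \<in> carrier G \<Longrightarrow> (x \<otimes> y) [^] (n::nat) = x [^] n \<otimes> y [^] n"
  by (rule monoid.pow_mult_distrib[OF monoid_axioms]) (auto simp: m_comm)

lemma Esym: "enhanced_power_adj G x y = enhanced_power_adj G y x"
  unfolding enhanced_power_adj_def by (auto simp: insert_commute)

lemma notEsym: "\<not> enhanced_power_adj G x y \<Longrightarrow> \<not> enhanced_power_adj G y x"
  using Esym by blast

lemma adjI:
  assumes fin: "finite (carrier G)" and z: "z \<in> carrier G"
    and "x = z [^] (m::nat)" "y = z [^] (n::nat)" "x \<noteq> y"
  shows "enhanced_power_adj G x y"
proof -
  have xy: "x \<in> carrier G" "y \<in> carrier G" using assms z by auto
  have "{x,y} \<subseteq> generate G {z}" using assms pow_in_gen z by auto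
  hence "generate G {x,y} \<subseteq> generate G {z}"
    using generate_subgroup_incl generate_is_subgroup z by (metis empty_subsetI insert_subset)
  hence "cyclic_group (subgroup_generated G {x,y})"
    using sub_cyclic[OF fin _ z] xy by auto
  thus ?thesis unfolding enhanced_power_adj_def using xy assms by auto
qed

lemma nonadjI:
  assumes fin: "finite (carrier G)" and nc: "\<not> cyclic_group (subgroup_generated G {p,q})"
    and xy: "x \<in> carrier G" "y \<in> carrier G"
    and pe: "p = x [^] (m::nat)" and qe: "q = y [^] (n::nat)"
  shows "\<not> enhanced_power_adj G x y"
proof
  assume "enhanced_power_adj G x y"
  hence c: "cyclic_group (subgroup_generated G {x,y})" unfolding enhanced_power_adj_def by blast
  have T: "{x,y} \<subseteq> carrier G" using xy by blast
  have sg: "subgroup (generate G {x,y}) G" by (rule generate_is_subgroup[OF T])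
  have xg: "x \<in> generate G {x,y}" "y \<in> generate G {x,y}" by (auto intro: generate.incl)
  have pg: "p \<in> generate G {x,y}" unfolding pe by (rule subgroup_nat_pow_closed'[OF sg xg(1)])
  have qg: "q \<in> generate G {x,y}" unfolding qe by (rule subgroup_nat_pow_closed'[OF sg xg(2)])
  have pq: "{p,q} \<subseteq> carrier G" using xy pe qe by simp
  have "cyclic_group (subgroup_generated G {p,q})"
    by (rule cyc_mono[OF fin pq T _ c]) (use pg qg in blast)
  thus False using nc by blast
qed

lemma main_abstract:
  assumes fin: "finite (carrier G)"
    and car: "a1 \<in> carrier G" "a2 \<in> carrier G" "b1 \<in> carrier G" "b2 \<in> carrier G"
       "c1 \<in> carrier G" "c2 \<in> carrier G"
    and ord: "a1 [^] (2::nat) = \<one>" "a2 [^] (2::nat) = \<one>" "b1 [^] (3::nat) = \<one>" "b2 [^] (3::nat) = \<one>"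
       "c1 [^] (5::nat) = \<one>" "c2 [^] (5::nat) = \<one>"
    and ne: "a1 \<noteq> \<one>" "a2 \<noteq> \<one>" "b1 \<noteq> \<one>" "b2 \<noteq> \<one>" "c1 \<noteq> \<one>" "c2 \<noteq> \<one>"
    and nca: "\<not> cyclic_group (subgroup_generated G {a1, a2})"
    and ncb: "\<not> cyclic_group (subgroup_generated G {b1, b2})"
    and ncc: "\<not> cyclic_group (subgroup_generated G {c1, c2})"
  shows "induces_cycle (enhanced_power_adj G) [a1 \<otimes> b1, b1 \<otimes> c2, a2, b2, a1 \<otimes> c1]"
proof -
  note P = pow0[OF car(1) ord(1)] pow1[OF car(1) ord(1)] pow0[OF car(2) ord(2)] pow1[OF car(2) ord(2)]
    pow0[OF car(3) ord(3)] pow1[OF car(3) ord(3)] pow0[OF car(4) ord(4)] pow1[OF car(4) ord(4)]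
    pow0[OF car(5) ord(5)] pow1[OF car(5) ord(5)] pow0[OF car(6) ord(6)] pow1[OF car(6) ord(6)]
  note S = P pmd car
  define v0 where "v0 = a1 \<otimes> b1"
  define v1 where "v1 = b1 \<otimes> c2"
  define v2 where "v2 = a2"
  define v3 where "v3 = b2"
  define v4 where "v4 = a1 \<otimes> c1"
  have vc: "v0 \<in> carrier G" "v1 \<in> carrier G" "v2 \<in> carrier G" "v3 \<in> carrier G" "v4 \<in> carrier G"
    using car by (auto simp: v0_def v1_def v2_def v3_def v4_def)
  have pr: "v0 [^] (15::nat) = a1" "v0 [^] (10::nat) = b1" "v0 [^] (6::nat) = \<one>"
     "v1 [^] (15::nat) = \<one>" "v1 [^] (10::nat) = b1" "v1 [^] (6::nat) = c2"
     "v2 [^] (15::nat) = a2" "v2 [^] (10::nat) = \<one>" "v2 [^] (6::nat) = \<one>"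
     "v3 [^] (15::nat) = \<one>" "v3 [^] (10::nat) = b2" "v3 [^] (6::nat) = \<one>"
     "v4 [^] (15::nat) = a1" "v4 [^] (10::nat) = \<one>" "v4 [^] (6::nat) = c1"
    by (simp_all add: S v0_def v1_def v2_def v3_def v4_def)
  have d: "v0 \<noteq> v1" "v0 \<noteq> v2" "v0 \<noteq> v3" "v0 \<noteq> v4" "v1 \<noteq> v2" "v1 \<noteq> v3" "v1 \<noteq> v4"
     "v2 \<noteq> v3" "v2 \<noteq> v4" "v3 \<noteq> v4"
    apply (metis pr(3) pr(6) ne(6)) apply (metis pr(2) pr(8) ne(3)) apply (metis pr(1) pr(10) ne(1))
    apply (metis pr(2) pr(14) ne(3)) apply (metis pr(5) pr(8) ne(3)) apply (metis pr(6) pr(12) ne(6))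
    apply (metis pr(4) pr(13) ne(1)) apply (metis pr(7) pr(10) ne(2)) apply (metis pr(9) pr(15) ne(5))
    apply (metis pr(10) pr(13) ne(1)) done
  have A: "enhanced_power_adj G v0 v1" "enhanced_power_adj G v1 v2" "enhanced_power_adj G v2 v3"
     "enhanced_power_adj G v3 v4" "enhanced_power_adj G v4 v0"
    apply (rule adjI[OF fin _ _ _ d(1), of "a1 \<otimes> b1 \<otimes> c2" 25 16])
    apply (simp_all add: S v0_def v1_def)[3]
    apply (rule adjI[OF fin _ _ _ d(5), of "a2 \<otimes> b1 \<otimes> c2" 16 15])
    apply (simp_all add: S v1_def v2_def)[3]
    apply (rule adjI[OF fin _ _ _ d(8), of "a2 \<otimes> b2" 3 4])
    apply (simp_all add: S v2_def v3_def)[3]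
    apply (rule adjI[OF fin _ _ _ d(10), of "a1 \<otimes> b2 \<otimes> c1" 10 21])
    apply (simp_all add: S v3_def v4_def)[3]
    apply (rule adjI[OF fin _ _ _ d(4)[symmetric], of "a1 \<otimes> b1 \<otimes> c1" 21 25])
    apply (simp_all add: S v0_def v4_def)[3]
    done
  have ncc': "\<not> cyclic_group (subgroup_generated G {c2, c1})" using ncc by (simp add: insert_commute)
  have nca': "\<not> cyclic_group (subgroup_generated G {a2, a1})" using nca by (simp add: insert_commute)
  have N: "\<not> enhanced_power_adj G v0 v2" "\<not> enhanced_power_adj G v0 v3" "\<not> enhanced_power_adj G v1 v3"
     "\<not> enhanced_power_adj G v1 v4" "\<not> enhanced_power_adj G v2 v4"
    apply (rule nonadjI[OF fin nca vc(1) vc(3), of 3 1])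
    apply (simp_all add: S v0_def v2_def)[2]
    apply (rule nonadjI[OF fin ncb vc(1) vc(4), of 4 1])
    apply (simp_all add: S v0_def v3_def)[2]
    apply (rule nonadjI[OF fin ncb vc(2) vc(4), of 10 1])
    apply (simp_all add: S v1_def v3_def)[2]
    apply (rule nonadjI[OF fin ncc' vc(2) vc(5), of 6 6])
    apply (simp_all add: S v1_def v4_def)[2]
    apply (rule nonadjI[OF fin nca' vc(3) vc(5), of 1 5])
    apply (simp_all add: S v2_def v4_def)[2]
    done
  have D: "\<And>x. \<not> enhanced_power_adj G x x" unfolding enhanced_power_adj_def by simp
  have all5: "\<And>P. (\<forall>i<(5::nat). P i) \<longleftrightarrow> P 0 \<and> P 1 \<and> P 2 \<and> P 3 \<and> P 4"
    by (auto simp: less_Suc_eq eval_nat_numeral)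
  have H: "\<forall>i<5. \<forall>j<5. enhanced_power_adj G ([v0, v1, v2, v3, v4] ! i) ([v0, v1, v2, v3, v4] ! j)
      \<longleftrightarrow> (j = Suc i mod 5 \<or> i = Suc j mod 5)"
    unfolding all5 using d by (simp add: A N D A[THEN Esym[THEN iffD1]] N[THEN notEsym])
  have L: "length [v0, v1, v2, v3, v4] = 5" by simp
  have "induces_cycle (enhanced_power_adj G) [v0, v1, v2, v3, v4]"
    unfolding induces_cycle_def L
  proof (intro conjI)
    show "distinct [v0, v1, v2, v3, v4]" using d by simp
  qed (simp, rule H)
  thus ?thesis by (simp add: v0_def v1_def v2_def v3_def v4_def)
qed

end


abbreviation G30 where "G30 \<equiv> C 30 \<times>\<times> C 30"

lemma G30_comm: "comm_group G30"
proof -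
  interpret group G30 by (intro DirProd_group group_integer_mod_group)
  show ?thesis
    by (rule group_comm_groupI) (auto simp: mult_DirProd' add.commute)
qed

lemma G30_fin: "finite (carrier G30)"
  by (simp add: carrier_integer_mod_group)

lemma pow_DirProd:
  assumes "monoid G" "monoid H"
  shows "(x, y) [^]\<^bsub>G \<times>\<times> H\<^esub> (n::nat) = (x [^]\<^bsub>G\<^esub> n, y [^]\<^bsub>H\<^esub> n)"
proof (induction n)
  case 0
  then show ?case by (simp add: nat_pow_def)
next
  case (Suc n)
  then show ?case by (simp add: nat_pow_def)
qed

lemma pow_G30: "(x, y) [^]\<^bsub>G30\<^esub> (n::nat) = ((int n * x) mod 30, (int n * y) mod 30)"
  by (simp add: pow_DirProd[OF group.is_monoid group.is_monoid])

lemma nt: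
  fixes K L u v m :: int
  assumes "(K*u) mod 30 = m" "(K*v) mod 30 = 0" "(L*u) mod 30 = 0" "(L*v) mod 30 = m"
    and m: "m = 15 \<or> m = 10 \<or> m = 6"
  shows False
proof -
  have "(L*(K*u)) mod 30 = (L*m) mod 30" using assms(1) by (metis mod_mult_right_eq)
  moreover have "(K*(L*u)) mod 30 = 0" using assms(3) by (metis mod_mult_right_eq mult_zero_right mod_0)
  moreover have "L*(K*u) = K*(L*u)" by simp
  ultimately have d: "(L*m) mod 30 = 0" by simp
  define W where "W = L*v"
  have W: "W mod 30 = m" using assms(4) W_def by simp
  from m show False
  proof (elim disjE)
    assume "m = 15" then have "2 dvd L" using d by presburger
    then have "2 dvd W" by (simp add: W_def)
    then show False using W \<open>m = 15\<close> by presburger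
  next
    assume "m = 10" then have "3 dvd L" using d by presburger
    then have "3 dvd W" by (simp add: W_def)
    then show False using W \<open>m = 10\<close> by presburger
  next
    assume "m = 6" then have "5 dvd L" using d by presburger
    then have "5 dvd W" by (simp add: W_def)
    then show False using W \<open>m = 6\<close> by presburger
  qed
qed

lemma nc_conc:
  assumes m: "m = 15 \<or> m = 10 \<or> m = 6"
  shows "\<not> cyclic_group (subgroup_generated G30 {(m,0),(0,m)})"
proof
  interpret comm_group G30 by (rule G30_comm)
  assume c: "cyclic_group (subgroup_generated G30 {(m,0),(0,m)})"
  have m': "0 \<le> m \<and> m < 30" using m by auto
  have sub: "{(m,0),(0,m)} \<subseteq> carrier G30" using m' by (simp add: carrier_integer_mod_group)
  obtain g where g: "g \<in> carrier G30" "generate G30 {(m,0),(0,m)} \<subseteq> generate G30 {g}"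
    using cyclic_gen[OF sub c] by blast
  have gen: "generate G30 {g} = {g [^]\<^bsub>G30\<^esub> k | k. k \<in> (UNIV::nat set)}"
    using generate_pow_on_finite_carrier G30_fin g(1) by blast
  have i1: "(m,0) \<in> generate G30 {(m,0),(0,m)}" by (rule generate.incl) simp
  have i2: "(0,m) \<in> generate G30 {(m,0),(0,m)}" by (rule generate.incl) simp
  have "(m,0) \<in> {g [^]\<^bsub>G30\<^esub> k | k. k \<in> (UNIV::nat set)}"
    using i1 g(2) gen by blast
  then obtain k where k: "(m,0) = g [^]\<^bsub>G30\<^esub> (k::nat)" by blast
  have "(0,m) \<in> {g [^]\<^bsub>G30\<^esub> k | k. k \<in> (UNIV::nat set)}"
    using i2 g(2) gen by blast
  then obtain l where l: "(0,m) = g [^]\<^bsub>G30\<^esub> (l::nat)" by blast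
  note kl = k l
  obtain u v where uv: "g = (u,v)" by force
  have e1: "(int k * u) mod 30 = m" "(int k * v) mod 30 = 0"
    using kl(1) unfolding uv pow_G30 by simp_all
  have e2: "(int l * u) mod 30 = 0" "(int l * v) mod 30 = m"
    using kl(2) unfolding uv pow_G30 by simp_all
  show False by (rule nt[OF e1 e2 m])
qed

lemma ord_conc:
  "group.ord G30 (15,0) = 2" "group.ord G30 (0,15) = 2"
  "group.ord G30 (10,0) = 3" "group.ord G30 (0,10) = 3"
  "group.ord G30 (6,0) = 5" "group.ord G30 (0,6) = 5"
proof -
  interpret comm_group G30 by (rule G30_comm)
  show "ord (15,0) = 2" "ord (0,15) = 2" "ord (10,0) = 3" "ord (0,10) = 3" "ord (6,0) = 5" "ord (0,6) = 5"
    by (auto simp: ord_unique carrier_integer_mod_group pow_G30; presburger)+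
qed



lemma all5: "(\<forall>i<(5::nat). P i) \<longleftrightarrow> P 0 \<and> P 1 \<and> P 2 \<and> P 3 \<and> P 4"
  by (auto simp: less_Suc_eq eval_nat_numeral)

lemma C5_not_perfect:
  assumes ic: "induces_cycle E [x0, x1, x2, x3, x4]"
  shows "chromatic_number E {x0, x1, x2, x3, x4} \<noteq> clique_number E {x0, x1, x2, x3, x4}"
proof -
  let ?S = "{x0, x1, x2, x3, x4}"
  from ic have dist: "distinct [x0, x1, x2, x3, x4]" unfolding induces_cycle_def by blast
  have L: "length [x0, x1, x2, x3, x4] = 5" by simp
  have H: "\<forall>i<5. \<forall>j<5. E ([x0, x1, x2, x3, x4] ! i) ([x0, x1, x2, x3, x4] ! j)
      \<longleftrightarrow> (j = Suc i mod 5 \<or> i = Suc j mod 5)"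
    using ic unfolding induces_cycle_def L by blast
  have F: "E x0 x1" "E x1 x2" "E x2 x3" "E x3 x4" "E x4 x0"
    "E x1 x0" "E x2 x1" "E x3 x2" "E x4 x3" "E x0 x4"
    "\<not> E x0 x2" "\<not> E x0 x3" "\<not> E x1 x3" "\<not> E x1 x4" "\<not> E x2 x4"
    "\<not> E x2 x0" "\<not> E x3 x0" "\<not> E x3 x1" "\<not> E x4 x1" "\<not> E x4 x2"
    using H[unfolded all5] by simp_all
  define f where "f x = (if x = x0 then 0 else if x = x1 then 1 else if x = x2 then 0
     else if x = x3 then (1::nat) else 2)" for x
  have col: "proper_colouring E ?S 3 f"
    unfolding proper_colouring_def f_def using dist F by auto
  have nocol: "\<not> proper_colouring E ?S k g" if "k < 3" for k g
  proof
    assume p: "proper_colouring E ?S k g"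
    have "g x0 < 2" "g x1 < 2" "g x2 < 2" "g x3 < 2" "g x4 < 2"
      using p that unfolding proper_colouring_def by auto
    moreover have "g x0 \<noteq> g x1" "g x1 \<noteq> g x2" "g x2 \<noteq> g x3" "g x3 \<noteq> g x4" "g x4 \<noteq> g x0"
      using p F dist unfolding proper_colouring_def by auto
    ultimately show False by linarith
  qed
  have chi: "chromatic_number E ?S = 3"
    unfolding chromatic_number_def
    by (rule Least_equality) (use col nocol in \<open>auto simp: not_less[symmetric]\<close>)
  have cl: "card K \<le> 2" if K: "K \<subseteq> ?S" "is_clique E K" for K
  proof -
    have cl': "\<And>x y. x \<in> K \<Longrightarrow> y \<in> K \<Longrightarrow> x \<noteq> y \<Longrightarrow> E x y"
      using K(2) unfolding is_clique_def by blast
    have KS: "\<And>x. x \<in> K \<Longrightarrow> x = x0 \<or> x = x1 \<or> x = x2 \<or> x = x3 \<or> x = x4" using K(1) by blast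
    have "K \<subseteq> {x0,x1} \<or> K \<subseteq> {x0,x4} \<or> K \<subseteq> {x1,x2} \<or> K \<subseteq> {x2,x3} \<or> K \<subseteq> {x3,x4}"
    proof (cases "x0 \<in> K")
      case T0: True
      show ?thesis
      proof (cases "x1 \<in> K")
        case True
        have "K \<subseteq> {x0,x1}"
        proof
          fix x assume x: "x \<in> K"
          show "x \<in> {x0,x1}" using KS[OF x] cl'[OF x T0] cl'[OF x True] F dist by auto
        qed
        thus ?thesis by blast
      next
        case False
        have "K \<subseteq> {x0,x4}"
        proof
          fix x assume x: "x \<in> K"
          show "x \<in> {x0,x4}" using KS[OF x] cl'[OF x T0] False x F dist by auto
        qed
        thus ?thesis by blast
      qed
    next
      case N0: False
      show ?thesis
      proof (cases "x1 \<in> K")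
        case T1: True
        have "K \<subseteq> {x1,x2}"
        proof
          fix x assume x: "x \<in> K"
          show "x \<in> {x1,x2}" using KS[OF x] cl'[OF x T1] N0 x F dist by auto
        qed
        thus ?thesis by blast
      next
        case N1: False
        show ?thesis
        proof (cases "x2 \<in> K")
          case T2: True
          have "K \<subseteq> {x2,x3}"
          proof
            fix x assume x: "x \<in> K"
            show "x \<in> {x2,x3}" using KS[OF x] cl'[OF x T2] N0 N1 x F dist by auto
          qed
          thus ?thesis by blast
        next
          case N2: False
          have "K \<subseteq> {x3,x4}"
          proof
            fix x assume x: "x \<in> K"
            show "x \<in> {x3,x4}" using KS[OF x] N0 N1 N2 x by auto
          qed
          thus ?thesis by blast
        qed
      qed
    qed
    then obtain p q where pq: "K \<subseteq> {p,q}" by blast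
    have "card K \<le> card {p,q}" by (rule card_mono) (simp_all add: pq)
    moreover have "card {p, q} \<le> 2" by (cases "p = q") simp_all
    ultimately show ?thesis by linarith
  qed
  have fin: "finite {card K | K. K \<subseteq> ?S \<and> is_clique E K}"
  proof -
    have "{card K | K. K \<subseteq> ?S \<and> is_clique E K} \<subseteq> card ` Pow ?S" by auto
    thus ?thesis by (rule finite_subset) simp
  qed
  have ne: "{card K | K. K \<subseteq> ?S \<and> is_clique E K} \<noteq> {}"
  proof -
    have "card {} \<in> {card K | K. K \<subseteq> ?S \<and> is_clique E K}"
      by (intro CollectI exI[of _ "{}"]) (simp add: is_clique_def)
    thus ?thesis by blast
  qed
  have "clique_number E ?S \<le> 2"
    unfolding clique_number_def using fin ne cl by (auto simp: Max_le_iff)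
  thus ?thesis using chi by simp
qed



theorem mainTheorem7:
  shows "\<not> perfect_graph (carrier (C 30 \<times>\<times> C 30)) (enhanced_power_adj (C 30 \<times>\<times> C 30))
    \<and> (\<forall>a1 a2 b1 b2 c1 c2.
          a1 \<in> carrier (C 30 \<times>\<times> C 30) \<and> a2 \<in> carrier (C 30 \<times>\<times> C 30) \<and>
          b1 \<in> carrier (C 30 \<times>\<times> C 30) \<and> b2 \<in> carrier (C 30 \<times>\<times> C 30) \<and>
          c1 \<in> carrier (C 30 \<times>\<times> C 30) \<and> c2 \<in> carrier (C 30 \<times>\<times> C 30) \<and>
          group.ord (C 30 \<times>\<times> C 30) a1 = 2 \<and> group.ord (C 30 \<times>\<times> C 30) a2 = 2 \<and>
          group.ord (C 30 \<times>\<times> C 30) b1 = 3 \<and> group.ord (C 30 \<times>\<times> C 30) b2 = 3 \<and>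
          group.ord (C 30 \<times>\<times> C 30) c1 = 5 \<and> group.ord (C 30 \<times>\<times> C 30) c2 = 5 \<and>
          \<not> cyclic_group (subgroup_generated (C 30 \<times>\<times> C 30) {a1, a2}) \<and>
          \<not> cyclic_group (subgroup_generated (C 30 \<times>\<times> C 30) {b1, b2}) \<and>
          \<not> cyclic_group (subgroup_generated (C 30 \<times>\<times> C 30) {c1, c2})
        \<longrightarrow> induces_cycle (enhanced_power_adj (C 30 \<times>\<times> C 30))
              [a1 \<otimes>\<^bsub>C 30 \<times>\<times> C 30\<^esub> b1, b1 \<otimes>\<^bsub>C 30 \<times>\<times> C 30\<^esub> c2, a2, b2,
               a1 \<otimes>\<^bsub>C 30 \<times>\<times> C 30\<^esub> c1])"
proof -
  interpret comm_group G30 by (rule G30_comm)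
  have part2: "\<forall>a1 a2 b1 b2 c1 c2.
          a1 \<in> carrier G30 \<and> a2 \<in> carrier G30 \<and>
          b1 \<in> carrier G30 \<and> b2 \<in> carrier G30 \<and>
          c1 \<in> carrier G30 \<and> c2 \<in> carrier G30 \<and>
          group.ord G30 a1 = 2 \<and> group.ord G30 a2 = 2 \<and> group.ord G30 b1 = 3 \<and> group.ord G30 b2 = 3 \<and> group.ord G30 c1 = 5 \<and> group.ord G30 c2 = 5 \<and>
          \<not> cyclic_group (subgroup_generated G30 {a1, a2}) \<and>
          \<not> cyclic_group (subgroup_generated G30 {b1, b2}) \<and>
          \<not> cyclic_group (subgroup_generated G30 {c1, c2})
        \<longrightarrow> induces_cycle (enhanced_power_adj G30)
              [a1 \<otimes>\<^bsub>G30\<^esub> b1, b1 \<otimes>\<^bsub>G30\<^esub> c2, a2, b2, a1 \<otimes>\<^bsub>G30\<^esub> c1]"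
  proof (intro allI impI)
    fix a1 a2 b1 b2 c1 c2
    assume h: "a1 \<in> carrier G30 \<and> a2 \<in> carrier G30 \<and>
          b1 \<in> carrier G30 \<and> b2 \<in> carrier G30 \<and>
          c1 \<in> carrier G30 \<and> c2 \<in> carrier G30 \<and>
          group.ord G30 a1 = 2 \<and> group.ord G30 a2 = 2 \<and> group.ord G30 b1 = 3 \<and> group.ord G30 b2 = 3 \<and> group.ord G30 c1 = 5 \<and> group.ord G30 c2 = 5 \<and>
          \<not> cyclic_group (subgroup_generated G30 {a1, a2}) \<and>
          \<not> cyclic_group (subgroup_generated G30 {b1, b2}) \<and>
          \<not> cyclic_group (subgroup_generated G30 {c1, c2})"
    have car: "a1 \<in> carrier G30" "a2 \<in> carrier G30" "b1 \<in> carrier G30" "b2 \<in> carrier G30"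
      "c1 \<in> carrier G30" "c2 \<in> carrier G30" using h by blast+
    have o: "group.ord G30 a1 = 2" "group.ord G30 a2 = 2" "group.ord G30 b1 = 3" "group.ord G30 b2 = 3" "group.ord G30 c1 = 5" "group.ord G30 c2 = 5"
      using h by blast+
    have nc: "\<not> cyclic_group (subgroup_generated G30 {a1, a2})"
      "\<not> cyclic_group (subgroup_generated G30 {b1, b2})"
      "\<not> cyclic_group (subgroup_generated G30 {c1, c2})" using h by blast+
    have pw: "a1 [^]\<^bsub>G30\<^esub> (2::nat) = \<one>\<^bsub>G30\<^esub>" "a2 [^]\<^bsub>G30\<^esub> (2::nat) = \<one>\<^bsub>G30\<^esub>"
      "b1 [^]\<^bsub>G30\<^esub> (3::nat) = \<one>\<^bsub>G30\<^esub>" "b2 [^]\<^bsub>G30\<^esub> (3::nat) = \<one>\<^bsub>G30\<^esub>"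
      "c1 [^]\<^bsub>G30\<^esub> (5::nat) = \<one>\<^bsub>G30\<^esub>" "c2 [^]\<^bsub>G30\<^esub> (5::nat) = \<one>\<^bsub>G30\<^esub>"
      using pow_ord_eq_1[OF car(1)] pow_ord_eq_1[OF car(2)] pow_ord_eq_1[OF car(3)]
        pow_ord_eq_1[OF car(4)] pow_ord_eq_1[OF car(5)] pow_ord_eq_1[OF car(6)] o
      by simp_all
    have ne: "a1 \<noteq> \<one>\<^bsub>G30\<^esub>" "a2 \<noteq> \<one>\<^bsub>G30\<^esub>" "b1 \<noteq> \<one>\<^bsub>G30\<^esub>"
      "b2 \<noteq> \<one>\<^bsub>G30\<^esub>" "c1 \<noteq> \<one>\<^bsub>G30\<^esub>" "c2 \<noteq> \<one>\<^bsub>G30\<^esub>"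
      using ord_eq_1[OF car(1)] ord_eq_1[OF car(2)] ord_eq_1[OF car(3)]
        ord_eq_1[OF car(4)] ord_eq_1[OF car(5)] ord_eq_1[OF car(6)] o
      by simp_all
    show "induces_cycle (enhanced_power_adj G30) [a1 \<otimes>\<^bsub>G30\<^esub> b1, b1 \<otimes>\<^bsub>G30\<^esub> c2, a2, b2, a1 \<otimes>\<^bsub>G30\<^esub> c1]"
      by (rule main_abstract[OF G30_fin car pw ne nc])
  qed
  have n1: "\<not> cyclic_group (subgroup_generated G30 {(15,0),(0,15)})" by (rule nc_conc) simp
  have n2: "\<not> cyclic_group (subgroup_generated G30 {(10,0),(0,10)})" by (rule nc_conc) simp
  have n3: "\<not> cyclic_group (subgroup_generated G30 {(6,0),(0,6)})" by (rule nc_conc) simp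
  have cyc: "induces_cycle (enhanced_power_adj G30)
     [(15,0) \<otimes>\<^bsub>G30\<^esub> (10,0), (10,0) \<otimes>\<^bsub>G30\<^esub> (0,6), (0,15), (0,10), (15,0) \<otimes>\<^bsub>G30\<^esub> (6,0)]"
    apply (rule part2[rule_format])
    using ord_conc n1 n2 n3 by (simp add: carrier_integer_mod_group)
  have "\<not> perfect_graph (carrier G30) (enhanced_power_adj G30)"
  proof
    assume p: "perfect_graph (carrier G30) (enhanced_power_adj G30)"
    let ?S = "{(15,0) \<otimes>\<^bsub>G30\<^esub> (10,0), (10,0) \<otimes>\<^bsub>G30\<^esub> (0,6), (0,15), (0,10), (15,0) \<otimes>\<^bsub>G30\<^esub> (6,0)}"
    have "?S \<subseteq> carrier G30" by (simp add: carrier_integer_mod_group)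
    hence "chromatic_number (enhanced_power_adj G30) ?S = clique_number (enhanced_power_adj G30) ?S"
      using p unfolding perfect_graph_def by blast
    thus False using C5_not_perfect[OF cyc] by blast
  qed
  thus ?thesis using part2 by blast
qed


end
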